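(* Let $\Bbbk$ be a field with $\mathrm{char}(\Bbbk)\neq2$, and let $\xi,\gamma\in\Bbbk$. Let $K=T_2(-1)$ be the Sweedler Hopf algebra with $\mathcal{R}$-matrix $\mathcal{R}_\xi$, $\mathcal{B}=K\text{-}\mathbf{Mod}$, and $A_\gamma=\Bbbk[u]$ the algebra in $\mathcal{B}$ described in the context. Then the $\mathcal{B}$-center of $A_\gamma$ (for $\mathcal{C}=\Bbbk\text{-}\mathbf{Mod}(\mathcal{B})\cong\mathcal{B}$) equals its left center: $$Z_{\mathcal{B}}(A_\gamma)=C^l(A_\gamma)=\Bbbk[u^2],\qquad g\cdot u^2=u^2,\quad x\cdot u^2=0,$$ as a commutative algebra in $\mathcal{B}\cong\mathcal{Z}_{\mathcal{B}}(\mathcal{C})$, independently of $\xi$ and $\gamma$.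
   Context: $T_2(-1)=\Bbbk\langle g,x\rangle/(g^2-1,x^2,gx+xg)$ with $g$ group-like and $\Delta(x)=g\otimes x+x\otimes1$; it is quasi-triangular with $\mathcal{R}_\xi=\frac12(1\otimes1+1\otimes g+g\otimes1-g\otimes g)+\frac\xi2(x\otimes x+x\otimes gx+gx\otimes gx-gx\otimes x)$. $\mathcal{B}=K\text{-}\mathbf{Mod}$ with braiding $\Psi(v\otimes w)=(\mathcal{R}_\xi^{(2)}\cdot w)\otimes(\mathcal{R}_\xi^{(1)}\cdot v)$. $A_\gamma=\Bbbk[u]$ is the $K$-module algebra with $g\cdot u=-u$, $x\cdot u=\gamma$ (action extended to products by the module algebra rule). Taking $H=\Bbbk$, $\mathcal{C}=\Bbbk\text{-}\mathbf{Mod}(\mathcal{B})$ is identified with $\mathcal{B}$ and its relative center $\mathcal{Z}_{\mathcal{B}}(\mathcal{C})$ with $\mathcal{B}$ (half-braidings given by $\Psi$). The $\mathcal{B}$-center of an algebra $(A,m)$ is the terminal object among pairs $(Z,\zeta\colon Z\to A)$ with $m(\zeta\otimes\mathrm{Id})=m(\mathrm{Id}\otimes\zeta)\Psi_{Z,A}$; the left center $C^l(A)$ is the largest subobject $C\subseteq A$ with $m\Psi_{C,A}=m$ on $C\otimes A$. *)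

theory Defs
  imports "HOL-Computational_Algebra.Polynomial"
begin

text \<open>The Sweedler Hopf algebra K = T_2(-1) is presented by generators g, x with
 g^2 = 1, x^2 = 0, gx + xg = 0.  A (left) K-module over the field 'a is therefore a
 'a-vector space together with two linear endomorphisms G (action of g) and X (action of x)
 satisfying these relations.\<close>

definition K_module :: "('a::field \<Rightarrow> 'z::ab_group_add \<Rightarrow> 'z) \<Rightarrow> ('z \<Rightarrow> 'z) \<Rightarrow> ('z \<Rightarrow> 'z) \<Rightarrow> bool" where
  "K_module sc G X \<longleftrightarrow> vector_space sc \<and> Vector_Spaces.linear sc sc G \<and> Vector_Spaces.linear sc sc X
     \<and> (\<forall>z. G (G z) = z) \<and> (\<forall>z. X (X z) = 0) \<and> (\<forall>z. G (X z) + X (G z) = 0)"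

definition K_hom_to_poly :: "('a::field \<Rightarrow> 'z::ab_group_add \<Rightarrow> 'z) \<Rightarrow> ('z \<Rightarrow> 'z) \<Rightarrow> ('z \<Rightarrow> 'z)
   \<Rightarrow> ('a poly \<Rightarrow> 'a poly) \<Rightarrow> ('a poly \<Rightarrow> 'a poly) \<Rightarrow> ('z \<Rightarrow> 'a poly) \<Rightarrow> bool" where
  "K_hom_to_poly sc GZ XZ G X f \<longleftrightarrow> Vector_Spaces.linear sc smult f
     \<and> (\<forall>z. f (GZ z) = G (f z)) \<and> (\<forall>z. f (XZ z) = X (f z))"

text \<open>A_gamma = k[u] as a K-module algebra: g.u = -u, x.u = gamma, action extended to products
 by the module algebra rule  h.(ab) = (h_(1).a)(h_(2).b), h.1 = eps(h) 1, with
 Delta(g) = g\<otimes>g, Delta(x) = g\<otimes>x + x\<otimes>1, eps(g)=1, eps(x)=0.\<close>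
definition A_gamma_action :: "'a::field \<Rightarrow> ('a poly \<Rightarrow> 'a poly) \<Rightarrow> ('a poly \<Rightarrow> 'a poly) \<Rightarrow> bool" where
  "A_gamma_action \<gamma> G X \<longleftrightarrow> Vector_Spaces.linear smult smult G \<and> Vector_Spaces.linear smult smult X
     \<and> G [:0, 1:] = [:0, -1:] \<and> X [:0, 1:] = [:\<gamma>:]
     \<and> G 1 = 1 \<and> X 1 = 0
     \<and> (\<forall>p q. G (p * q) = G p * G q)
     \<and> (\<forall>p q. X (p * q) = G p * X q + X p * q)"

definition K_submodule :: "('a::field poly \<Rightarrow> 'a poly) \<Rightarrow> ('a poly \<Rightarrow> 'a poly) \<Rightarrow> 'a poly set \<Rightarrow> bool" where
  "K_submodule G X C \<longleftrightarrow> 0 \<in> C \<and> (\<forall>p\<in>C. \<forall>q\<in>C. p + q \<in> C) \<and> (\<forall>c. \<forall>p\<in>C. smult c p \<in> C)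
     \<and> (\<forall>p\<in>C. G p \<in> C) \<and> (\<forall>p\<in>C. X p \<in> C)"

text \<open>m (Id \<otimes> zeta) Psi_{Z,A} (z \<otimes> a) = sum_i (R_i^(2).a) zeta(R_i^(1).z), where
 R_xi = 1/2(1\<otimes>1 + 1\<otimes>g + g\<otimes>1 - g\<otimes>g) + xi/2(x\<otimes>x + x\<otimes>gx + gx\<otimes>gx - gx\<otimes>x).\<close>
definition mPsi :: "'a::field \<Rightarrow> ('a poly \<Rightarrow> 'a poly) \<Rightarrow> ('a poly \<Rightarrow> 'a poly)
    \<Rightarrow> ('z \<Rightarrow> 'z) \<Rightarrow> ('z \<Rightarrow> 'z) \<Rightarrow> ('z \<Rightarrow> 'a poly) \<Rightarrow> 'z \<Rightarrow> 'a poly \<Rightarrow> 'a poly" where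
  "mPsi \<xi> G X GZ XZ \<zeta> z a =
     smult (1/2) (a * \<zeta> z + G a * \<zeta> z + a * \<zeta> (GZ z) - G a * \<zeta> (GZ z))
   + smult (\<xi>/2) (X a * \<zeta> (XZ z) + G (X a) * \<zeta> (XZ z)
                  + G (X a) * \<zeta> (GZ (XZ z)) - X a * \<zeta> (GZ (XZ z)))"

text \<open>The defining condition m(zeta \<otimes> Id) = m(Id \<otimes> zeta) Psi_{Z,A}, checked on pure tensors
 z \<otimes> a with z ranging over the carrier Z.\<close>
definition braided_central :: "'a::field \<Rightarrow> ('a poly \<Rightarrow> 'a poly) \<Rightarrow> ('a poly \<Rightarrow> 'a poly)
    \<Rightarrow> 'z set \<Rightarrow> ('z \<Rightarrow> 'z) \<Rightarrow> ('z \<Rightarrow> 'z) \<Rightarrow> ('z \<Rightarrow> 'a poly) \<Rightarrow> bool" where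
  "braided_central \<xi> G X Z GZ XZ \<zeta> \<longleftrightarrow> (\<forall>z\<in>Z. \<forall>a. \<zeta> z * a = mPsi \<xi> G X GZ XZ \<zeta> z a)"

definition is_left_center :: "'a::field \<Rightarrow> ('a poly \<Rightarrow> 'a poly) \<Rightarrow> ('a poly \<Rightarrow> 'a poly) \<Rightarrow> 'a poly set \<Rightarrow> bool" where
  "is_left_center \<xi> G X C \<longleftrightarrow>
     K_submodule G X C \<and> braided_central \<xi> G X C G X id
     \<and> (\<forall>C'. K_submodule G X C' \<and> braided_central \<xi> G X C' G X id \<longrightarrow> C' \<subseteq> C)"

definition even_part :: "'a::field poly set" where
  "even_part = {pcompose q [:0, 0, 1:] | q. True}"

end

theory Submission
  imports Defs
begin

lemma act_basic:
  assumes act: "A_gamma_action \<gamma> G X"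
  shows "G (p + q) = G p + G q" "G (smult c p) = smult c (G p)"
    "X (p + q) = X p + X q" "X (smult c p) = smult c (X p)"
    "G 0 = 0" "X 0 = 0" "G [:c:] = [:c:]" "X [:c:] = 0"
    "G [:0,1:] = [:0,-1:]" "X [:0,1:] = [:\<gamma>:]"
    "G (p * q) = G p * G q" "X (p * q) = G p * X q + X p * q"
    "G 1 = 1" "X 1 = 0"
proof -
  have lg: "Vector_Spaces.linear smult smult G" and lx: "Vector_Spaces.linear smult smult X"
    using act unfolding A_gamma_action_def by auto
  show g1: "G (p + q) = G p + G q" "G (smult c p) = smult c (G p)"
    using lg unfolding Vector_Spaces.linear_iff by auto
  show "X (p + q) = X p + X q" "X (smult c p) = smult c (X p)"
    using lx unfolding Vector_Spaces.linear_iff by auto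
  have "G (0 + 0) = G 0 + G 0" "X (0 + 0) = X 0 + X 0"
    using lg lx unfolding Vector_Spaces.linear_iff by blast+
  then show "G 0 = 0" "X 0 = 0" by (metis add.right_neutral add_cancel_right_right)+
  have "G (smult c 1) = smult c (G 1)" "X (smult c 1) = smult c (X 1)"
    using lg lx unfolding Vector_Spaces.linear_iff by blast+
  moreover have "smult c (1::'a poly) = [:c:]" by simp
  ultimately show "G [:c:] = [:c:]" "X [:c:] = 0"
    using act unfolding A_gamma_action_def by auto
  show "G [:0,1:] = [:0,-1:]" "X [:0,1:] = [:\<gamma>:]"
    "G (p * q) = G p * G q" "X (p * q) = G p * X q + X p * q"
    "G 1 = 1" "X 1 = 0"
    using act unfolding A_gamma_action_def by auto
qed

lemma even_G:
  assumes act: "A_gamma_action \<gamma> G X"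
  shows "G (pcompose a [:0,0,1:]) = pcompose a [:0,0,1:] \<and> X (pcompose a [:0,0,1:]) = 0"
proof (induction a)
  case 0
  then show ?case using act_basic[OF act] by simp
next
  case (pCons c a)
  have u2: "[:0,0,1:] = [:0,1:] * ([:0,1:] :: 'a poly)" by simp
  have "G ([:0,1:] * [:0,1:]) = [:0,-1:] * [:0,-1:]" "X ([:0,1:] * [:0,1:]) = [:0,-1:] * [:\<gamma>:] + [:\<gamma>:] * [:0,1:]"
    unfolding act_basic(11,12)[OF act] by (simp_all only: act_basic(9,10)[OF act])
  then have gu2: "G [:0,0,1:] = [:0,0,1:]" and xu2: "X [:0,0,1:] = 0"
    by simp_all
  show ?case using pCons.IH
    unfolding pcompose_pCons act_basic(1,3,11,12)[OF act] gu2 xu2 act_basic(7,8)[OF act]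
    by simp
qed

lemma decomp:
  fixes p :: "'a::field poly"
  shows "\<exists>a b. p = pcompose a [:0,0,1:] + [:0,1:] * pcompose b [:0,0,1:]"
proof (induction p)
  case 0
  then show ?case by (rule exI[of _ 0], rule exI[of _ 0], simp)
next
  case (pCons c q)
  then obtain a b where q: "q = pcompose a [:0,0,1:] + [:0,1:] * pcompose b [:0,0,1:]" by blast
  have "pCons c q = pcompose (pCons c b) [:0,0,1:] + [:0,1:] * pcompose a [:0,0,1:]"
    unfolding q pcompose_pCons
    by (simp add: pCons_eq_iff algebra_simps add.commute)
  then show ?case by blast
qed

lemma h3: "(2::'a::field) \<noteq> 0 \<Longrightarrow> smult (c/2) (w + w) = smult c (w::'a poly)"
proof -
  assume "(2::'a) \<noteq> 0"
  then have "c / 2 + c / 2 = c" by (simp add: field_simps)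
  then show ?thesis by (metis smult_add_left smult_add_right)
qed

lemma h3': "(2::'a::field) \<noteq> 0 \<Longrightarrow> smult (1/2) (w + w) = (w::'a poly)"
  using h3[of 1 w] by simp

lemma mPsi_u:
  assumes act: "A_gamma_action (\<gamma>::'a::field) G X" and char: "(2::'a) \<noteq> 0"
  shows "mPsi \<xi> G X GZ XZ \<zeta> z [:0,1:] = [:0,1:] * \<zeta> (GZ z) + smult (\<xi>*\<gamma>) (\<zeta> (XZ z))"
proof -
  have m1: "[:0,-1:] = - [:0,1::'a:]" by simp
  have c: "[:\<gamma>:] * p = smult \<gamma> p" for p by simp
  let ?w1 = "[:0,1:] * \<zeta> (GZ z)" and ?w2 = "smult \<gamma> (\<zeta> (XZ z))"
  have e1: "[:0, 1:] * \<zeta> z + G [:0, 1:] * \<zeta> z + [:0, 1:] * \<zeta> (GZ z) - G [:0, 1:] * \<zeta> (GZ z) = ?w1 + ?w1"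
    unfolding act_basic(9)[OF act] m1 by (simp add: algebra_simps)
  have e2: "X [:0, 1:] * \<zeta> (XZ z) + G (X [:0, 1:]) * \<zeta> (XZ z) + G (X [:0, 1:]) * \<zeta> (GZ (XZ z)) -
          X [:0, 1:] * \<zeta> (GZ (XZ z)) = ?w2 + ?w2"
    unfolding act_basic(10,7)[OF act] c by (simp add: algebra_simps)
  show ?thesis unfolding mPsi_def e1 e2 h3[OF char] h3'[OF char]
    by (simp add: mult.commute)
qed

lemma mPsi_even:
  assumes act: "A_gamma_action (\<gamma>::'a::field) G X" and char: "(2::'a) \<noteq> 0"
    and gz: "G z = z" and xz: "X z = 0"
  shows "mPsi \<xi> G X G X id z a = z * a"
proof -
  have e1: "a * id z + G a * id z + a * id (G z) - G a * id (G z) = z * a + z * a"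
    using gz by (simp add: algebra_simps)
  have e2: "X a * id (X z) + G (X a) * id (X z) + G (X a) * id (G (X z)) - X a * id (G (X z)) = 0"
    using xz act_basic(5)[OF act] by simp
  show ?thesis unfolding mPsi_def e1 e2 h3'[OF char] by simp
qed

lemma ring_aux:
  fixes A B U C :: "'r::comm_ring_1"
  assumes "(A + U * B) * U = U * (A - U * B) + C * B"
  shows "(2 * (U * U) - C) * B = 0"
proof -
  have "(2 * (U * U) - C) * B = ((A + U * B) * U) - (U * (A - U * B) + C * B)"
    by (simp add: algebra_simps mult_2)
  then show ?thesis using assms by simp
qed

lemma key:
  assumes act: "A_gamma_action (\<gamma>::'a::field) G X" and char: "(2::'a) \<noteq> 0"
    and eq: "p * [:0,1:] = [:0,1:] * G p + smult (\<xi>*\<gamma>) (X p)"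
  shows "p \<in> even_part"
proof -
  obtain a b where p: "p = pcompose a [:0,0,1:] + [:0,1:] * pcompose b [:0,0,1:]"
    using decomp by blast
  define A where "A = pcompose a [:0,0,1:]"
  define B where "B = pcompose b [:0,0,1:]"
  have gA: "G A = A" and xA: "X A = 0" and gB: "G B = B" and xB: "X B = 0"
    using even_G[OF act] unfolding A_def B_def by auto
  have m1: "[:0,-1:] = - [:0,1::'a:]" by simp
  have gp: "G p = A - [:0,1:] * B"
    unfolding p A_def[symmetric] B_def[symmetric] act_basic(1,11)[OF act] gA gB act_basic(9)[OF act] m1
    by simp
  have xp: "X p = smult \<gamma> B"
    unfolding p A_def[symmetric] B_def[symmetric] act_basic(3,12)[OF act] xA xB act_basic(10)[OF act]
    by simp
  have e: "(A + [:0,1:] * B) * [:0,1:] = [:0,1:] * (A - [:0,1:] * B) + [:\<xi>*\<gamma>*\<gamma>:] * B"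
    using eq[unfolded gp xp] unfolding p A_def[symmetric] B_def[symmetric]
    by (simp add: smult_smult mult.commute mult.left_commute)
  have prod0: "(2 * ([:0,1:] * [:0,1:]) - [:\<xi>*\<gamma>*\<gamma>:]) * B = 0"
    by (rule ring_aux[OF e])

  have nz: "2 * ([:0,1:] * [:0,1:]) - [:\<xi>*\<gamma>*\<gamma>:] \<noteq> (0::'a poly)"
  proof -
    have "2 * ([:0,1:] * [:0,1:]) - [:\<xi>*\<gamma>*\<gamma>:] = [:-(\<xi>*\<gamma>*\<gamma>),0,2::'a:]"
      by (simp add: numeral_2_eq_2 one_pCons) (metis numeral_poly)
    moreover have "[:-(\<xi>*\<gamma>*\<gamma>),0,2::'a:] \<noteq> 0" using char by simp
    ultimately show ?thesis by metis
  qed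
  have "B = 0" using prod0 nz by (metis mult_eq_0_iff)
  then have "p = pcompose a [:0,0,1:]" unfolding p B_def by simp
  then show ?thesis unfolding even_part_def by blast
qed

lemma even_mem: "pcompose q [:0,0,1:] \<in> even_part"
  unfolding even_part_def by blast

lemma even_E: "p \<in> even_part \<Longrightarrow> (\<And>q. p = pcompose q [:0,0,1:] \<Longrightarrow> P) \<Longrightarrow> P"
  unfolding even_part_def by blast

lemma even_closed:
  "0 \<in> even_part" "1 \<in> even_part"
  "p \<in> even_part \<Longrightarrow> q \<in> even_part \<Longrightarrow> p + q \<in> even_part"
  "p \<in> even_part \<Longrightarrow> q \<in> even_part \<Longrightarrow> p * q \<in> even_part"
  "p \<in> even_part \<Longrightarrow> smult c p \<in> even_part"
proof -
  show "0 \<in> even_part" using even_mem[of 0] by simp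
  show "1 \<in> even_part" using even_mem[of 1] by (simp only: pcompose_1)
  show "p \<in> even_part \<Longrightarrow> q \<in> even_part \<Longrightarrow> p + q \<in> even_part"
    by (elim even_E) (simp only: pcompose_add[symmetric] even_mem)
  show "p \<in> even_part \<Longrightarrow> q \<in> even_part \<Longrightarrow> p * q \<in> even_part"
    by (elim even_E) (simp only: pcompose_mult[symmetric] even_mem)
  show "p \<in> even_part \<Longrightarrow> smult c p \<in> even_part"
    by (elim even_E) (simp only: pcompose_smult[symmetric] even_mem)
qed

theorem proposition7p2:
  fixes \<xi> \<gamma> :: "'a::field"
    and G X :: "'a poly \<Rightarrow> 'a poly"
  assumes char: "(2::'a) \<noteq> 0"
    and act: "A_gamma_action \<gamma> G X"
  shows
    \<comment> \<open>B-center: (k[u^2], inclusion) is an object of the category of pairs and is terminal\<close>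
    "(K_submodule G X even_part \<and> braided_central \<xi> G X even_part G X id
      \<and> (\<forall>(sc :: 'a \<Rightarrow> 'z::ab_group_add \<Rightarrow> 'z) GZ XZ \<zeta>.
           K_module sc GZ XZ \<and> K_hom_to_poly sc GZ XZ G X \<zeta> \<and> braided_central \<xi> G X UNIV GZ XZ \<zeta>
           \<longrightarrow> (\<exists>!f. (\<forall>z. f z \<in> even_part) \<and> K_hom_to_poly sc GZ XZ G X f \<and> (\<forall>z. id (f z) = \<zeta> z))))
     \<comment> \<open>left center\<close>
     \<and> is_left_center \<xi> G X even_part
     \<comment> \<open>algebra structure and action\<close>
     \<and> (1::'a poly) \<in> even_part \<and> (\<forall>p::'a poly\<in>even_part. \<forall>q\<in>even_part. p * q \<in> even_part)
     \<and> G [:0, 0, 1:] = [:0, 0, 1:] \<and> X [:0, 0, 1:] = 0"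
proof -
  have ev: "G p = p \<and> X p = 0" if "p \<in> even_part" for p
    using that even_G[OF act] unfolding even_part_def by blast
  have sub: "K_submodule G X even_part"
    unfolding K_submodule_def
  proof (intro conjI ballI allI)
    fix p q :: "'a poly" and c :: 'a assume "p \<in> even_part"
    then show "G p \<in> even_part" "X p \<in> even_part" "smult c p \<in> even_part"
      using ev[of p] even_closed(1,5) by simp_all
    assume "q \<in> even_part"
    then show "p + q \<in> even_part" using \<open>p \<in> even_part\<close> even_closed(3) by blast
  qed (rule even_closed(1))
  have bc: "braided_central \<xi> G X even_part G X id"
    unfolding braided_central_def
  proof (intro ballI allI)
    fix z a :: "'a poly" assume "z \<in> even_part"
    then have "G z = z" "X z = 0" using ev by auto
    then show "id z * a = mPsi \<xi> G X G X id z a"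
      using mPsi_even[OF act char, of z \<xi> a] by simp
  qed
  have lc: "is_left_center \<xi> G X even_part"
    unfolding is_left_center_def
  proof (intro conjI sub bc allI impI)
    fix C' assume C': "K_submodule G X C' \<and> braided_central \<xi> G X C' G X id"
    show "C' \<subseteq> even_part"
    proof
      fix p assume "p \<in> C'"
      then have "id p * [:0,1:] = mPsi \<xi> G X G X id p [:0,1:]"
        using C'[THEN conjunct2] unfolding braided_central_def by blast
      then have "p * [:0,1:] = [:0,1:] * G p + smult (\<xi>*\<gamma>) (X p)"
        unfolding mPsi_u[OF act char] by simp
      then show "p \<in> even_part" by (rule key[OF act char])
    qed
  qed
  have univ: "\<forall>(sc :: 'a \<Rightarrow> 'z::ab_group_add \<Rightarrow> 'z) GZ XZ \<zeta>.
           K_module sc GZ XZ \<and> K_hom_to_poly sc GZ XZ G X \<zeta> \<and> braided_central \<xi> G X UNIV GZ XZ \<zeta>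
           \<longrightarrow> (\<exists>!f. (\<forall>z. f z \<in> even_part) \<and> K_hom_to_poly sc GZ XZ G X f \<and> (\<forall>z. id (f z) = \<zeta> z))"
  proof (intro allI impI)
    fix sc :: "'a \<Rightarrow> 'z::ab_group_add \<Rightarrow> 'z" and GZ XZ \<zeta>
    assume H: "K_module sc GZ XZ \<and> K_hom_to_poly sc GZ XZ G X \<zeta> \<and> braided_central \<xi> G X UNIV GZ XZ \<zeta>"
    have hom: "K_hom_to_poly sc GZ XZ G X \<zeta>" using H[THEN conjunct2, THEN conjunct1] .
    have bcz: "braided_central \<xi> G X UNIV GZ XZ \<zeta>" using H[THEN conjunct2, THEN conjunct2] .
    have mem: "\<zeta> z \<in> even_part" for z
    proof -
      have "\<zeta> z * [:0,1:] = mPsi \<xi> G X GZ XZ \<zeta> z [:0,1:]"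
        using bcz unfolding braided_central_def by blast
      moreover have "\<zeta> (GZ z) = G (\<zeta> z)" "\<zeta> (XZ z) = X (\<zeta> z)"
        using hom unfolding K_hom_to_poly_def by blast+
      ultimately have "\<zeta> z * [:0,1:] = [:0,1:] * G (\<zeta> z) + smult (\<xi>*\<gamma>) (X (\<zeta> z))"
        unfolding mPsi_u[OF act char] by simp
      then show ?thesis by (rule key[OF act char])
    qed
    show "\<exists>!f. (\<forall>z. f z \<in> even_part) \<and> K_hom_to_poly sc GZ XZ G X f \<and> (\<forall>z. id (f z) = \<zeta> z)"
    proof (rule ex1I[of _ \<zeta>])
      show "(\<forall>z. \<zeta> z \<in> even_part) \<and> K_hom_to_poly sc GZ XZ G X \<zeta> \<and> (\<forall>z. id (\<zeta> z) = \<zeta> z)"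
      proof -
        show ?thesis using mem hom by simp
      qed
    next
      fix f assume "(\<forall>z. f z \<in> even_part) \<and> K_hom_to_poly sc GZ XZ G X f \<and> (\<forall>z. id (f z) = \<zeta> z)"
      then show "f = \<zeta>" by (simp add: fun_eq_iff)
    qed
  qed
  have u2: "[:0,0,1:] = [:0,1:] * ([:0,1:] :: 'a poly)" by simp
  have "G ([:0,1:] * [:0,1:]) = [:0,-1:] * [:0,-1:]" "X ([:0,1:] * [:0,1:]) = [:0,-1:] * [:\<gamma>:] + [:\<gamma>:] * [:0,1:]"
    unfolding act_basic(11,12)[OF act] by (simp_all only: act_basic(9,10)[OF act])
  then have gu2: "G [:0,0,1:] = [:0,0,1:]" and xu2: "X [:0,0,1:] = 0"
    by simp_all
  have mul: "\<forall>p::'a poly\<in>even_part. \<forall>q\<in>even_part. p * q \<in> even_part"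
    using even_closed(4) by blast
  show ?thesis
    apply (intro conjI)
    apply (rule sub)
    apply (rule bc)
    apply (rule univ)
    apply (rule lc)
    apply (rule even_closed(2))
    apply (rule mul)
    apply (rule gu2)
    apply (rule xu2)
    done
qed

end
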